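(* Let $\pi_n=\mathbb P(\Gamma\notin\mathcal T)$ for $\Gamma\in G(n,\tfrac12)$, let $f(n)=2n\sum_{i=0}^n\binom ni 2^{-n-\binom i2}$, let $t(n)$ be the number of graphs in $\mathcal T$ on the vertex set $\{1,\dots,n\}$, and let $c(n)$ be the total number of cliques (including the empty clique and single vertices) in all these $t(n)$ graphs. Then for every $n$: (1) $\pi_{2n}\le\pi_n^2+f(n)$; (2) $\pi_{2n}\le\pi_n^2+2\pi_n(1-\pi_n)\frac{n\,c(n)}{2^n t(n)}+(1-\pi_n)^2$; (3) $\pi_{n+1}\le\pi_n+f(n)$.
   Context: $G(n,p)$: random simplicial graphs on $n$ labelled vertices, each edge independently present with probability $p$. $\mathcal T$ is the smallest class of finite simplicial graphs containing $K_{2,2}$, closed under adding a new vertex adjacent exactly to the vertices of an induced subgraph which is not a clique, and closed under gluing two members along a common induced subgraph which is not a clique (optionally adding edges between vertices of the two non-shared parts). *)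

theory Defs
  imports Complex_Main
begin

definition is_graph :: "nat set \<Rightarrow> (nat \<times> nat) set \<Rightarrow> bool" where
  "is_graph V E \<longleftrightarrow> E \<subseteq> V \<times> V \<and> sym E \<and> irrefl E"

definition is_clique :: "(nat \<times> nat) set \<Rightarrow> nat set \<Rightarrow> bool" where
  "is_clique E S \<longleftrightarrow> (\<forall>x\<in>S. \<forall>y\<in>S. x \<noteq> y \<longrightarrow> (x, y) \<in> E)"

definition induced :: "(nat \<times> nat) set \<Rightarrow> nat set \<Rightarrow> (nat \<times> nat) set" where
  "induced E S = E \<inter> (S \<times> S)"

inductive inT :: "nat set \<Rightarrow> (nat \<times> nat) set \<Rightarrow> bool" where
  K22: "inT {0,1,2,3} {(0,2),(2,0),(0,3),(3,0),(1,2),(2,1),(1,3),(3,1)}"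
| iso: "\<lbrakk> inT V E; bij_betw f V V'; E' \<subseteq> V' \<times> V';
          \<forall>x\<in>V. \<forall>y\<in>V. ((x, y) \<in> E \<longleftrightarrow> (f x, f y) \<in> E') \<rbrakk> \<Longrightarrow> inT V' E'"
| cone: "\<lbrakk> inT V E; S \<subseteq> V; \<not> is_clique E S; v \<notin> V \<rbrakk> \<Longrightarrow>
          inT (insert v V) (E \<union> {(v, s) | s. s \<in> S} \<union> {(s, v) | s. s \<in> S})"
| glue: "\<lbrakk> inT V1 E1; inT V2 E2; induced E1 (V1 \<inter> V2) = induced E2 (V1 \<inter> V2);
          \<not> is_clique E1 (V1 \<inter> V2);
          F \<subseteq> (V1 - V2) \<times> (V2 - V1) \<rbrakk> \<Longrightarrow>
          inT (V1 \<union> V2) (E1 \<union> E2 \<union> F \<union> F\<inverse>)"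

text \<open>All labelled graphs on vertex set {1..n}; G(n,1/2) is the uniform distribution on them.\<close>
definition graphs_on :: "nat \<Rightarrow> (nat \<times> nat) set set" where
  "graphs_on n = {E. is_graph {1..n} E}"

definition piT :: "nat \<Rightarrow> real" where
  "piT n = real (card {E \<in> graphs_on n. \<not> inT {1..n} E}) / real (card (graphs_on n))"

definition fT :: "nat \<Rightarrow> real" where
  "fT n = 2 * real n * (\<Sum>i=0..n. real (n choose i) / 2 ^ (n + (i choose 2)))"

definition tT :: "nat \<Rightarrow> nat" where
  "tT n = card {E \<in> graphs_on n. inT {1..n} E}"

definition cT :: "nat \<Rightarrow> nat" where
  "cT n = (\<Sum>E\<in>{E \<in> graphs_on n. inT {1..n} E}. card {K. K \<subseteq> {1..n} \<and> is_clique E K})"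

end

theory Submission
  imports Defs
begin


definition gr :: "nat set \<Rightarrow> (nat \<times> nat) set set" where
  "gr V = {E. is_graph V E}"

definition prob :: "nat set \<Rightarrow> ((nat\<times>nat) set \<Rightarrow> bool) \<Rightarrow> real" where
  "prob V P = real (card {E \<in> gr V. P E}) / real (card (gr V))"

definition nbr :: "(nat\<times>nat) set \<Rightarrow> nat set \<Rightarrow> nat \<Rightarrow> nat set" where
  "nbr E A b = {a\<in>A. (b,a) \<in> E}"

lemma gr_finite: "finite V \<Longrightarrow> finite (gr V)"
  unfolding gr_def is_graph_def by (rule finite_subset[of _ "Pow (V\<times>V)"]) auto

lemma empty_in_gr: "{} \<in> gr V" unfolding gr_def is_graph_def sym_def irrefl_def by auto

lemma card_gr_pos: "finite V \<Longrightarrow> card (gr V) > 0"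
  using gr_finite empty_in_gr by (metis card_gt_0_iff empty_iff)


lemma s1: "E \<in> gr (V \<union> W) \<Longrightarrow> induced E V \<union> induced E W \<union> (E \<inter> V \<times> W) \<union> (E \<inter> V \<times> W)\<inverse> = E"
  unfolding gr_def is_graph_def induced_def sym_def by auto
lemma s2: "V \<inter> W = {} \<Longrightarrow> E1 \<in> gr V \<Longrightarrow> E2 \<in> gr W \<Longrightarrow> H \<subseteq> V \<times> W \<Longrightarrow>
   induced (E1 \<union> E2 \<union> H \<union> H\<inverse>) V = E1 \<and> induced (E1 \<union> E2 \<union> H \<union> H\<inverse>) W = E2 \<and> (E1 \<union> E2 \<union> H \<union> H\<inverse>) \<inter> V \<times> W = H"
  unfolding gr_def is_graph_def induced_def by auto
lemma s3: "E \<in> gr (V \<union> W) \<Longrightarrow> induced E V \<in> gr V \<and> induced E W \<in> gr W"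
  unfolding gr_def is_graph_def induced_def sym_def irrefl_def by auto
lemma s4: "E1 \<in> gr V \<Longrightarrow> E2 \<in> gr W \<Longrightarrow> H \<subseteq> V \<times> W \<Longrightarrow> V \<inter> W = {} \<Longrightarrow>
   E1 \<union> E2 \<union> H \<union> H\<inverse> \<in> gr (V \<union> W)"
  unfolding gr_def is_graph_def induced_def sym_def irrefl_def by auto
lemma split_bij:
  assumes "V \<inter> W = {}"
  shows "bij_betw (\<lambda>E. (induced E V, induced E W, E \<inter> (V\<times>W))) (gr (V\<union>W)) (gr V \<times> gr W \<times> Pow (V\<times>W))"
  by (rule bij_betw_byWitness[where f'="\<lambda>(E1,E2,H). E1 \<union> E2 \<union> H \<union> H\<inverse>"])
     (use assms s1 s2 s3 s4 in auto)

lemma bij_card_filter: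
  assumes "bij_betw f A B"
  shows "card {x\<in>A. P (f x)} = card {y\<in>B. P y}"
proof -
  have "inj_on f {x\<in>A. P (f x)}" by (rule inj_on_subset[OF bij_betw_imp_inj_on[OF assms]]) auto
  moreover have "f ` {x\<in>A. P (f x)} = {y\<in>B. P y}" using assms unfolding bij_betw_def by auto
  ultimately show ?thesis using card_image by fastforce
qed





lemma minus_VV: "V \<inter> W = {} \<Longrightarrow> E \<in> gr (V \<union> W) \<Longrightarrow> E - E \<inter> (V\<times>V) = induced E W \<union> (E \<inter> V \<times> W) \<union> (E \<inter> V \<times> W)\<inverse>"
  unfolding gr_def is_graph_def induced_def sym_def by auto

lemma indep2:
  assumes fin: "finite V" "finite W" and disj: "V \<inter> W = {}"
  and Q: "\<forall>E\<in>gr (V\<union>W). Q E = Q (E - E \<inter> (V\<times>V))"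
  shows "prob (V\<union>W) (\<lambda>E. P (induced E V) \<and> Q E) = prob V P * prob (V\<union>W) Q"
proof -
  let ?f = "\<lambda>E. (induced E V, induced E W, E \<inter> (V\<times>W))"
  let ?T = "gr W \<times> Pow (V\<times>W)"
  let ?Q' = "\<lambda>s. Q (fst s \<union> snd s \<union> (snd s)\<inverse>)"
  have bij: "bij_betw ?f (gr (V\<union>W)) (gr V \<times> ?T)" using split_bij[OF disj] .
  have finT: "finite ?T" using fin gr_finite by auto
  have QQ: "\<forall>E\<in>gr (V\<union>W). Q E = ?Q' (snd (?f E))" using Q minus_VV[OF disj] by simp
  have c1: "card {E\<in>gr (V\<union>W). P (induced E V) \<and> Q E} = card {E\<in>gr (V\<union>W). P (fst (?f E)) \<and> ?Q' (snd (?f E))}"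
    by (rule arg_cong[where f=card]) (use QQ in auto)
  also have "\<dots> = card {t \<in> gr V \<times> ?T. P (fst t) \<and> ?Q' (snd t)}"
    using bij_card_filter[OF bij, of "\<lambda>t. P (fst t) \<and> ?Q' (snd t)"] .
  also have "{t \<in> gr V \<times> ?T. P (fst t) \<and> ?Q' (snd t)} = {x\<in>gr V. P x} \<times> {s\<in>?T. ?Q' s}" by auto
  finally have c1: "card {E\<in>gr (V\<union>W). P (induced E V) \<and> Q E} = card {x\<in>gr V. P x} * card {s\<in>?T. ?Q' s}"
    by (simp add: card_cartesian_product)
  have "card {E\<in>gr (V\<union>W). Q E} = card {E\<in>gr (V\<union>W). ?Q' (snd (?f E))}"
    by (rule arg_cong[where f=card]) (use QQ in auto)
  also have "\<dots> = card {t \<in> gr V \<times> ?T. ?Q' (snd t)}"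
    using bij_card_filter[OF bij, of "\<lambda>t. ?Q' (snd t)"] .
  also have "{t \<in> gr V \<times> ?T. ?Q' (snd t)} = gr V \<times> {s\<in>?T. ?Q' s}" by auto
  finally have c2: "card {E\<in>gr (V\<union>W). Q E} = card (gr V) * card {s\<in>?T. ?Q' s}"
    by (simp add: card_cartesian_product)
  have c3: "card (gr (V\<union>W)) = card (gr V) * card ?T"
    using bij_betw_same_card[OF bij] by (simp add: card_cartesian_product)
  have pos: "card (gr V) > 0" using card_gr_pos fin by auto
  show ?thesis unfolding prob_def c1 c2 c3 using pos by (simp add: field_simps)
qed

lemma gr_induced: "E \<in> gr V \<Longrightarrow> induced E V = E"
  unfolding gr_def is_graph_def induced_def by auto

lemma prob_true: "finite V \<Longrightarrow> prob V (\<lambda>E. True) = 1"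
  unfolding prob_def using card_gr_pos[of V] by simp

lemma local:
  assumes "finite V" "S \<subseteq> V"
  shows "prob V (\<lambda>E. P (induced E S)) = prob S P"
proof -
  have V: "V = S \<union> (V - S)" using assms by auto
  have "prob (S \<union> (V - S)) (\<lambda>E. P (induced E S) \<and> True) = prob S P * prob (S \<union> (V - S)) (\<lambda>E. True)"
    by (rule indep2) (use assms finite_subset in auto)
  then show ?thesis using prob_true[of "S \<union> (V - S)"] assms V by (simp add: finite_subset)
qed

lemma prob_cong: "\<forall>E\<in>gr V. P E = Q E \<Longrightarrow> prob V P = prob V Q"
  unfolding prob_def by (rule arg_cong2[where f="(/)"], rule arg_cong[where f=real], rule arg_cong[where f=card]) auto

lemma prob_mono: "finite V \<Longrightarrow> \<forall>E\<in>gr V. P E \<longrightarrow> Q E \<Longrightarrow> prob V P \<le> prob V Q"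
  unfolding prob_def
  by (intro divide_right_mono) (auto intro!: card_mono gr_finite)

lemma prob_disj: "finite V \<Longrightarrow> prob V (\<lambda>E. P E \<or> Q E) \<le> prob V P + prob V Q"
proof -
  assume f: "finite V"
  have "{E\<in>gr V. P E \<or> Q E} = {E\<in>gr V. P E} \<union> {E\<in>gr V. Q E}" by auto
  then have "card {E\<in>gr V. P E \<or> Q E} \<le> card {E\<in>gr V. P E} + card {E\<in>gr V. Q E}"
    using card_Un_le[of "{E\<in>gr V. P E}" "{E\<in>gr V. Q E}"] by simp
  then have "real (card {E\<in>gr V. P E \<or> Q E}) \<le> real (card {E\<in>gr V. P E}) + real (card {E\<in>gr V. Q E})"
    by linarith
  then show ?thesis unfolding prob_def by (simp add: add_divide_distrib[symmetric] divide_right_mono)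
qed

lemma prob_ex: "finite V \<Longrightarrow> finite I \<Longrightarrow> prob V (\<lambda>E. \<exists>i\<in>I. P i E) \<le> (\<Sum>i\<in>I. prob V (P i))"
proof -
  assume f: "finite V" "finite I"
  have "{E\<in>gr V. \<exists>i\<in>I. P i E} = (\<Union>i\<in>I. {E\<in>gr V. P i E})" by auto
  then have "card {E\<in>gr V. \<exists>i\<in>I. P i E} \<le> (\<Sum>i\<in>I. card {E\<in>gr V. P i E})"
    using card_UN_le[OF f(2), of "\<lambda>i. {E\<in>gr V. P i E}"] by simp
  then have "real (card {E\<in>gr V. \<exists>i\<in>I. P i E}) \<le> (\<Sum>i\<in>I. real (card {E\<in>gr V. P i E}))"
    by (simp only: of_nat_sum[symmetric] of_nat_le_iff)
  then show ?thesis unfolding prob_def by (simp add: sum_divide_distrib[symmetric] divide_right_mono)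
qed

lemma prob_not: "finite V \<Longrightarrow> prob V (\<lambda>E. \<not> P E) = 1 - prob V P"
proof -
  assume f: "finite V"
  have "card {E\<in>gr V. \<not> P E} + card {E\<in>gr V. P E} = card (gr V)"
  proof -
    have "{E\<in>gr V. \<not> P E} \<union> {E\<in>gr V. P E} = gr V" by auto
    moreover have "{E\<in>gr V. \<not> P E} \<inter> {E\<in>gr V. P E} = {}" by auto
    ultimately show ?thesis using gr_finite[OF f] by (metis (no_types, lifting) card_Un_disjoint finite_Un)
  qed
  then have "real (card {E\<in>gr V. \<not> P E}) = real (card (gr V)) - real (card {E\<in>gr V. P E})" by linarith
  then show ?thesis unfolding prob_def using card_gr_pos[OF f] by (simp add: diff_divide_distrib)
qed

lemma prob_le1: "finite V \<Longrightarrow> prob V P \<le> 1"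
  unfolding prob_def using card_gr_pos[of V] gr_finite[of V]
  by (simp add: card_mono divide_le_eq_1)

lemma prob_ge0: "prob V P \<ge> 0"
  unfolding prob_def by simp




lemma v1: "w \<notin> A \<Longrightarrow> E \<in> gr (insert w A) \<Longrightarrow>
  induced E A \<union> (\<lambda>a. (w,a)) ` nbr E A w \<union> (\<lambda>a. (a,w)) ` nbr E A w = E"
  unfolding gr_def is_graph_def induced_def sym_def irrefl_def nbr_def by auto

lemma v2: "w \<notin> A \<Longrightarrow> E0 \<in> gr A \<Longrightarrow> N \<subseteq> A \<Longrightarrow>
  induced (E0 \<union> (\<lambda>a. (w,a)) ` N \<union> (\<lambda>a. (a,w)) ` N) A = E0 \<and>
  nbr (E0 \<union> (\<lambda>a. (w,a)) ` N \<union> (\<lambda>a. (a,w)) ` N) A w = N"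
  unfolding gr_def is_graph_def induced_def nbr_def by auto

lemma v3: "E \<in> gr (insert w A) \<Longrightarrow> induced E A \<in> gr A \<and> nbr E A w \<subseteq> A"
  unfolding gr_def is_graph_def induced_def sym_def irrefl_def nbr_def by auto

lemma v4: "w \<notin> A \<Longrightarrow> E0 \<in> gr A \<Longrightarrow> N \<subseteq> A \<Longrightarrow>
  E0 \<union> (\<lambda>a. (w,a)) ` N \<union> (\<lambda>a. (a,w)) ` N \<in> gr (insert w A)"
  unfolding gr_def is_graph_def sym_def irrefl_def by auto

lemma nbr_sub: "x \<in> nbr E A w \<Longrightarrow> x \<in> A" unfolding nbr_def by auto

lemma vert_bij:
  assumes "w \<notin> A"
  shows "bij_betw (\<lambda>E. (induced E A, nbr E A w)) (gr (insert w A)) (gr A \<times> Pow A)"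
  by (rule bij_betw_byWitness[where f'="\<lambda>(E0,N). E0 \<union> (\<lambda>a. (w,a)) ` N \<union> (\<lambda>a. (a,w)) ` N"])
     (use assms v1 v2 v3 v4 nbr_sub in auto)

lemma card_gr_insert: "finite A \<Longrightarrow> w \<notin> A \<Longrightarrow> card (gr (insert w A)) = card (gr A) * 2 ^ card A"
  using bij_betw_same_card[OF vert_bij[of w A]] by (simp add: card_cartesian_product card_Pow)

lemma card_gr: "finite A \<Longrightarrow> card (gr A) = 2 ^ (card A choose 2)"
proof (induction A rule: finite_induct)
  case empty
  have "gr {} = {{}}" unfolding gr_def is_graph_def sym_def irrefl_def by auto
  then show ?case by (simp add: numeral_2_eq_2)
next
  case (insert x F)
  have "Suc (card F) choose 2 = card F + (card F choose 2)"
    by (simp add: numeral_2_eq_2)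
  then show ?case using insert card_gr_insert[OF insert(1,2)] by (simp add: power_add)
qed

lemma clique_induced: "N \<subseteq> S \<Longrightarrow> is_clique (induced E S) N = is_clique E N"
  unfolding is_clique_def induced_def by auto

lemma complete_unique: "card {E\<in>gr N. is_clique E N} = 1"
proof -
  have "{E\<in>gr N. is_clique E N} = {{(x,y). x\<in>N \<and> y\<in>N \<and> x\<noteq>y}}"
    unfolding gr_def is_graph_def is_clique_def sym_def irrefl_def by auto
  then show ?thesis by simp
qed

lemma clique_prob:
  assumes "finite A" "N \<subseteq> A"
  shows "real (card {E\<in>gr A. is_clique E N}) = real (card (gr A)) / 2 ^ (card N choose 2)"
proof -
  have "prob A (\<lambda>E. is_clique (induced E N) N) = prob N (\<lambda>E. is_clique E N)"
    by (rule local) (use assms in auto)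
  moreover have "prob A (\<lambda>E. is_clique (induced E N) N) = prob A (\<lambda>E. is_clique E N)"
    using clique_induced[of N N] by simp
  moreover have "prob N (\<lambda>E. is_clique E N) = 1 / 2 ^ (card N choose 2)"
    unfolding prob_def complete_unique using card_gr[OF finite_subset[OF assms(2,1)]] by simp
  ultimately have "prob A (\<lambda>E. is_clique E N) = 1 / 2 ^ (card N choose 2)" by simp
  then show ?thesis unfolding prob_def using card_gr_pos[OF assms(1)]
    by (simp add: field_simps)
qed

definition qq :: "nat \<Rightarrow> real" where
  "qq n = (\<Sum>i=0..n. real (n choose i) / 2 ^ (n + (i choose 2)))"

lemma sum_pow_card:
  assumes "finite A"
  shows "(\<Sum>K\<in>Pow A. g (card K)) = (\<Sum>i=0..card A. real (card A choose i) * g i)"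
proof -
  have "(\<Sum>K\<in>Pow A. g (card K)) = (\<Sum>i\<in>{0..card A}. \<Sum>K\<in>{K\<in>Pow A. card K = i}. g (card K))"
    by (rule sum.group[symmetric]) (use assms card_mono in auto)
  also have "\<dots> = (\<Sum>i\<in>{0..card A}. real (card {K\<in>Pow A. card K = i}) * g i)"
    by (intro sum.cong) auto
  also have "\<dots> = (\<Sum>i=0..card A. real (card A choose i) * g i)"
  proof (intro sum.cong refl)
    fix i
    have "{K\<in>Pow A. card K = i} = {K. K \<subseteq> A \<and> card K = i}" by auto
    then show "real (card {K\<in>Pow A. card K = i}) * g i = real (card A choose i) * g i"
      using n_subsets[OF assms] by simp
  qed
  finally show ?thesis .
qed

lemma card_filter_sum: "finite S \<Longrightarrow> card {x\<in>S. P x} = (\<Sum>x\<in>S. if P x then 1 else 0)"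
  by (simp add: sum.inter_filter[symmetric])

lemma vert_count:
  assumes "finite A" "w \<notin> A"
  shows "card {E\<in>gr (insert w A). P (induced E A) \<and> is_clique E (nbr E A w)}
       = (\<Sum>E0\<in>{E0\<in>gr A. P E0}. card {K. K \<subseteq> A \<and> is_clique E0 K})"
proof -
  have eq: "\<forall>E\<in>gr (insert w A). (P (induced E A) \<and> is_clique E (nbr E A w)) =
     (P (fst (induced E A, nbr E A w)) \<and> is_clique (fst (induced E A, nbr E A w)) (snd (induced E A, nbr E A w)))"
    using clique_induced[of _ A] v3 by auto
  have "card {E\<in>gr (insert w A). P (induced E A) \<and> is_clique E (nbr E A w)}
     = card {E\<in>gr (insert w A). (\<lambda>t. P (fst t) \<and> is_clique (fst t) (snd t)) (induced E A, nbr E A w)}"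
    using eq by (metis (no_types, lifting))
  also have "\<dots> = card {t\<in>gr A \<times> Pow A. P (fst t) \<and> is_clique (fst t) (snd t)}"
    by (rule bij_card_filter[OF vert_bij[OF assms(2)]])
  also have "{t\<in>gr A \<times> Pow A. P (fst t) \<and> is_clique (fst t) (snd t)} = (SIGMA E0:{E0\<in>gr A. P E0}. {K. K \<subseteq> A \<and> is_clique E0 K})"
    by auto
  also have "card \<dots> = (\<Sum>E0\<in>{E0\<in>gr A. P E0}. card {K. K \<subseteq> A \<and> is_clique E0 K})"
    by (rule card_SigmaI) (use assms gr_finite in auto)
  finally show ?thesis .
qed

lemma vert_prob:
  assumes "finite A" "w \<notin> A"
  shows "prob (insert w A) (\<lambda>E. is_clique E (nbr E A w)) = qq (card A)"
proof -
  have "card {E\<in>gr (insert w A). True \<and> is_clique E (nbr E A w)}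
       = (\<Sum>E0\<in>{E0\<in>gr A. True}. card {K. K \<subseteq> A \<and> is_clique E0 K})"
    by (rule vert_count[OF assms])
  also have "\<dots> = (\<Sum>E0\<in>gr A. \<Sum>K\<in>Pow A. if is_clique E0 K then 1 else 0)"
    by (intro sum.cong) (auto simp: card_filter_sum[symmetric] assms Pow_def)
  also have "\<dots> = (\<Sum>K\<in>Pow A. \<Sum>E0\<in>gr A. if is_clique E0 K then 1 else 0)"
    by (rule sum.swap)
  also have "\<dots> = (\<Sum>K\<in>Pow A. card {E0\<in>gr A. is_clique E0 K})"
    by (intro sum.cong) (auto simp: card_filter_sum[symmetric] assms gr_finite)
  finally have c: "real (card {E\<in>gr (insert w A). is_clique E (nbr E A w)}) = (\<Sum>K\<in>Pow A. real (card {E0\<in>gr A. is_clique E0 K}))"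
    by simp
  also have "\<dots> = (\<Sum>K\<in>Pow A. real (card (gr A)) / 2 ^ (card K choose 2))"
    by (intro sum.cong) (auto simp: clique_prob assms)
  finally have c2: "real (card {E\<in>gr (insert w A). is_clique E (nbr E A w)}) / real (card (gr (insert w A)))
    = (\<Sum>K\<in>Pow A. real (card (gr A)) / 2 ^ (card K choose 2)) / (real (card (gr A)) * 2 ^ card A)"
    using card_gr_insert[OF assms] by simp
  also have "\<dots> = (\<Sum>K\<in>Pow A. 1 / 2 ^ (card A + (card K choose 2)))"
    using card_gr_pos[OF assms(1)] by (simp add: sum_divide_distrib power_add field_simps)
  also have "\<dots> = (\<Sum>i=0..card A. real (card A choose i) * (1 / 2 ^ (card A + (i choose 2))))"
    by (rule sum_pow_card[OF assms(1)])
  also have "\<dots> = qq (card A)" unfolding qq_def by simp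
  finally show ?thesis unfolding prob_def .
qed

definition cc :: "nat set \<Rightarrow> nat" where
  "cc A = (\<Sum>E0\<in>{E0\<in>gr A. inT A E0}. card {K. K \<subseteq> A \<and> is_clique E0 K})"

lemma vert_probT:
  assumes "finite A" "w \<notin> A"
  shows "prob (insert w A) (\<lambda>E. inT A (induced E A) \<and> is_clique E (nbr E A w))
       = real (cc A) / (real (card (gr A)) * 2 ^ card A)"
  unfolding prob_def vert_count[OF assms] cc_def card_gr_insert[OF assms] by simp




lemma cone_eq:
  assumes "E \<in> gr V" "insert c X \<subseteq> V"
  shows "induced E X \<union> {(c, s) |s. s \<in> nbr E X c} \<union> {(s, c) |s. s \<in> nbr E X c} = induced E (insert c X)"
  using assms unfolding gr_def is_graph_def induced_def nbr_def sym_def irrefl_def by auto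

lemma clique_sub: "is_clique E S \<Longrightarrow> T \<subseteq> S \<Longrightarrow> is_clique E T"
  unfolding is_clique_def by auto

lemma chain_aux:
  assumes "finite C" "C \<inter> A = {}" "E \<in> gr V" "A \<union> C \<subseteq> V" "inT A (induced E A)"
    "\<forall>b\<in>C. \<not> is_clique E (nbr E A b)"
  shows "inT (A \<union> C) (induced E (A \<union> C))"
  using assms
proof (induction C rule: finite_induct)
  case empty
  then show ?case by simp
next
  case (insert c C)
  have IH: "inT (A \<union> C) (induced E (A \<union> C))" using insert by auto
  have cn: "c \<notin> A \<union> C" using insert by auto
  have sub: "nbr E (A \<union> C) c \<subseteq> A \<union> C" unfolding nbr_def by auto
  have nc: "\<not> is_clique (induced E (A \<union> C)) (nbr E (A \<union> C) c)"
  proof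
    assume "is_clique (induced E (A \<union> C)) (nbr E (A \<union> C) c)"
    then have "is_clique E (nbr E (A \<union> C) c)" using clique_induced[OF sub] by simp
    moreover have "nbr E A c \<subseteq> nbr E (A \<union> C) c" unfolding nbr_def by auto
    ultimately have "is_clique E (nbr E A c)" using clique_sub by blast
    then show False using insert by auto
  qed
  have "inT (insert c (A \<union> C)) (induced E (A \<union> C) \<union> {(c, s) |s. s \<in> nbr E (A \<union> C) c} \<union> {(s, c) |s. s \<in> nbr E (A \<union> C) c})"
    by (rule inT.cone[OF IH sub nc cn])
  moreover have "induced E (A \<union> C) \<union> {(c, s) |s. s \<in> nbr E (A \<union> C) c} \<union> {(s, c) |s. s \<in> nbr E (A \<union> C) c}
     = induced E (insert c (A \<union> C))"
    by (rule cone_eq) (use insert in auto)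
  ultimately show ?case by simp
qed

lemma chain:
  assumes "finite V" "A \<subseteq> V" "E \<in> gr V" "inT A (induced E A)"
    "\<forall>b\<in>V - A. \<not> is_clique E (nbr E A b)"
  shows "inT V E"
proof -
  have "inT (A \<union> (V - A)) (induced E (A \<union> (V - A)))"
    by (rule chain_aux) (use assms in auto)
  moreover have "A \<union> (V - A) = V" using assms by auto
  ultimately show ?thesis using gr_induced[OF assms(3)] by simp
qed

lemma inT_size: "inT V E \<Longrightarrow> finite V \<and> 4 \<le> card V"
proof (induction rule: inT.induct)
  case K22
  then show ?case by simp
next
  case (iso V E f V' E')
  then show ?case using bij_betw_finite bij_betw_same_card by metis
next
  case (cone V E S v)
  then show ?case by simp
next
  case (glue V1 E1 V2 E2 F)
  then show ?case by (meson card_mono finite_UnI le_trans sup_ge1)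
qed



definition img :: "(nat \<Rightarrow> nat) \<Rightarrow> (nat\<times>nat) set \<Rightarrow> (nat\<times>nat) set" where
  "img f E = (\<lambda>(x,y). (f x, f y)) ` E"

locale mbij =
  fixes f g :: "nat \<Rightarrow> nat" and S S' :: "nat set"
  assumes fS: "\<forall>x\<in>S. f x \<in> S' \<and> g (f x) = x"
  and gS: "\<forall>y\<in>S'. g y \<in> S \<and> f (g y) = y"
begin

lemma bijf: "bij_betw f S S'"
  by (rule bij_betw_byWitness[where f'=g]) (use fS gS in auto)

lemma finj: "x \<in> S \<Longrightarrow> y \<in> S \<Longrightarrow> f x = f y \<Longrightarrow> x = y"
proof -
  assume a: "x \<in> S" "y \<in> S" "f x = f y"
  have "x = g (f x)" using fS a(1) by auto
  also have "\<dots> = g (f y)" using a(3) by simp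
  also have "\<dots> = y" using fS a(2) by auto
  finally show "x = y" .
qed

lemma img_gr: assumes "E \<in> gr S" shows "img f E \<in> gr S'"
proof -
  have ES: "E \<subseteq> S\<times>S" "sym E" "irrefl E" using assms unfolding gr_def is_graph_def by auto
  have "img f E \<subseteq> S'\<times>S'" using ES(1) fS unfolding img_def by auto
  moreover have "sym (img f E)" using ES(2) unfolding sym_def img_def by auto
  moreover have "irrefl (img f E)"
  proof -
    { fix x y assume xy: "(x,y) \<in> E" "f x = f y"
      then have "x \<in> S" "y \<in> S" using ES(1) by auto
      then have "x = y" using finj xy(2) by blast
      then have False using ES(3) xy(1) unfolding irrefl_def by auto }
    then show ?thesis unfolding irrefl_def img_def by auto
  qed
  ultimately show ?thesis unfolding gr_def is_graph_def by auto
qed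

lemma img_inv: "E \<in> gr S \<Longrightarrow> img g (img f E) = E"
proof -
  assume "E \<in> gr S"
  then have ES: "E \<subseteq> S \<times> S" unfolding gr_def is_graph_def by auto
  have "img g (img f E) = (\<lambda>p. p) ` E" unfolding img_def image_image
    by (rule image_cong) (use ES fS in auto)
  then show ?thesis by simp
qed

lemma img_edge: "E \<subseteq> S \<times> S \<Longrightarrow> x \<in> S \<Longrightarrow> y \<in> S \<Longrightarrow> ((f x, f y) \<in> img f E) = ((x,y) \<in> E)"
proof
  assume a: "E \<subseteq> S \<times> S" "x \<in> S" "y \<in> S" "(f x, f y) \<in> img f E"
  then obtain u v where uv: "(u,v) \<in> E" "f u = f x" "f v = f y" unfolding img_def by auto
  then have "u \<in> S" "v \<in> S" using a(1) by auto
  then have "u = x" "v = y" using finj uv a(2,3) by blast+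
  then show "(x,y) \<in> E" using uv by simp
next
  assume "(x,y) \<in> E" then show "(f x, f y) \<in> img f E" unfolding img_def by force
qed

lemma inT_img: "inT S E \<Longrightarrow> E \<in> gr S \<Longrightarrow> inT S' (img f E)"
proof -
  assume a: "inT S E" "E \<in> gr S"
  have ES: "E \<subseteq> S \<times> S" using a unfolding gr_def is_graph_def by auto
  show ?thesis
  proof (rule inT.iso[OF a(1) bijf])
    show "img f E \<subseteq> S' \<times> S'" using ES fS unfolding img_def by auto
    show "\<forall>x\<in>S. \<forall>y\<in>S. ((x, y) \<in> E) = ((f x, f y) \<in> img f E)" using img_edge[OF ES] by simp
  qed
qed

end

lemma mbij_sym: "mbij f g S S' \<Longrightarrow> mbij g f S' S"
  unfolding mbij_def by auto

lemma img_bij: assumes "mbij f g S S'" shows "bij_betw (img f) (gr S) (gr S')"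
proof (rule bij_betw_byWitness[where f'="img g"])
  interpret a: mbij f g S S' by fact
  interpret b: mbij g f S' S using mbij_sym[OF assms] .
  show "\<forall>a\<in>gr S. img g (img f a) = a" using a.img_inv by auto
  show "\<forall>a'\<in>gr S'. img f (img g a') = a'" using b.img_inv by auto
  show "img f ` gr S \<subseteq> gr S'" using a.img_gr by auto
  show "img g ` gr S' \<subseteq> gr S" using b.img_gr by auto
qed

lemma inT_img_iff: assumes "mbij f g S S'" "E \<in> gr S" shows "inT S' (img f E) = inT S E"
proof -
  interpret a: mbij f g S S' by fact
  interpret b: mbij g f S' S using mbij_sym[OF assms(1)] .
  show ?thesis using a.inT_img[OF _ assms(2)] b.inT_img[OF _ a.img_gr[OF assms(2)]] a.img_inv[OF assms(2)]
    by auto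
qed

lemma clique_img: assumes "mbij f g S S'" "E \<in> gr S"
  shows "card {K. K \<subseteq> S' \<and> is_clique (img f E) K} = card {K. K \<subseteq> S \<and> is_clique E K}"
proof -
  interpret a: mbij f g S S' by fact
  have ES: "E \<subseteq> S \<times> S" using assms unfolding gr_def is_graph_def by auto
  have bp: "bij_betw (image f) (Pow S) (Pow S')" by (rule bij_betw_Pow[OF a.bijf])
  have "\<forall>K\<in>Pow S. is_clique (img f E) (f ` K) = is_clique E K"
  proof
    fix K assume K: "K \<in> Pow S"
    show "is_clique (img f E) (f ` K) = is_clique E K"
      unfolding is_clique_def using K a.img_edge[OF ES] a.fS
      by (auto, metis subsetD, metis subsetD)
  qed
  then have "card {K\<in>Pow S. is_clique (img f E) (f ` K)} = card {K\<in>Pow S. is_clique E K}"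
    by (metis (no_types, lifting))
  moreover have "card {K\<in>Pow S. is_clique (img f E) (f ` K)} = card {K\<in>Pow S'. is_clique (img f E) K}"
    by (rule bij_card_filter[OF bp])
  ultimately show ?thesis by (simp add: Pow_def)
qed

lemma card_filter_img: assumes "mbij f g S S'"
  shows "card {E\<in>gr S'. P E} = card {E\<in>gr S. P (img f E)}"
  using bij_card_filter[OF img_bij[OF assms]] by simp

lemma cc_img: assumes "mbij f g S S'" "finite S" shows "cc S' = cc S"
proof -
  have fS': "finite S'" using mbij.bijf[OF assms(1)] assms(2) bij_betw_finite by blast
  have "cc S' = (\<Sum>E\<in>gr S'. if inT S' E then card {K. K \<subseteq> S' \<and> is_clique E K} else 0)"
    unfolding cc_def by (rule sum.inter_filter[OF gr_finite[OF fS']])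
  also have "\<dots> = (\<Sum>E\<in>gr S. if inT S' (img f E) then card {K. K \<subseteq> S' \<and> is_clique (img f E) K} else 0)"
    by (rule sum.reindex_bij_betw[OF img_bij[OF assms(1)], symmetric])
  also have "\<dots> = (\<Sum>E\<in>gr S. if inT S E then card {K. K \<subseteq> S \<and> is_clique E K} else 0)"
    by (intro sum.cong refl) (simp add: inT_img_iff[OF assms(1)] clique_img[OF assms(1)])
  also have "\<dots> = cc S"
    unfolding cc_def by (rule sum.inter_filter[OF gr_finite[OF assms(2)], symmetric])
  finally show ?thesis .
qed




lemma induced_induced: "A \<subseteq> X \<Longrightarrow> induced (induced E X) A = induced E A"
  unfolding induced_def by auto

lemma nbr_induced: "A \<subseteq> X \<Longrightarrow> b \<in> X \<Longrightarrow> nbr (induced E X) A b = nbr E A b"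
  unfolding induced_def nbr_def by auto

lemma vert_local:
  assumes "finite V" "A \<subseteq> V" "b \<in> V" "b \<notin> A"
  shows "prob V (\<lambda>E. is_clique E (nbr E A b)) = qq (card A)"
proof -
  let ?X = "insert b A"
  have X: "?X \<subseteq> V" using assms by auto
  have "prob V (\<lambda>E. is_clique E (nbr E A b)) = prob V (\<lambda>E. is_clique (induced E ?X) (nbr (induced E ?X) A b))"
  proof (rule prob_cong, rule ballI)
    fix E
    have s: "nbr E A b \<subseteq> ?X" unfolding nbr_def by auto
    have n: "nbr (induced E ?X) A b = nbr E A b" by (rule nbr_induced) auto
    show "is_clique E (nbr E A b) = is_clique (induced E ?X) (nbr (induced E ?X) A b)"
      unfolding n using clique_induced[OF s] by simp
  qed
  also have "\<dots> = prob ?X (\<lambda>E. is_clique E (nbr E A b))"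
    by (rule local[OF assms(1) X])
  also have "\<dots> = qq (card A)"
    by (rule vert_prob) (use assms finite_subset in auto)
  finally show ?thesis .
qed

lemma XB:
  assumes fin: "finite A" "finite B" and disj: "A \<inter> B = {}" and b: "b \<in> B"
  shows "prob (A\<union>B) (\<lambda>E. inT A (induced E A) \<and> is_clique E (nbr E A b) \<and> \<not> inT B (induced E B))
    = real (cc A) / (real (card (gr A)) * 2 ^ card A) * prob B (\<lambda>E. \<not> inT B E)"
proof -
  let ?X = "insert b A" and ?W = "B - {b}"
  let ?P = "\<lambda>E. inT A (induced E A) \<and> is_clique E (nbr E A b)"
  let ?Q = "\<lambda>E. \<not> inT B (induced E B)"
  have U: "A \<union> B = ?X \<union> ?W" using b by auto
  have d: "?X \<inter> ?W = {}" using disj by auto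
  have Qc: "\<forall>E\<in>gr (?X \<union> ?W). ?Q E = ?Q (E - E \<inter> (?X \<times> ?X))"
  proof
    fix E assume "E \<in> gr (?X \<union> ?W)"
    then have "irrefl E" unfolding gr_def is_graph_def by auto
    then have "induced (E - E \<inter> (?X \<times> ?X)) B = induced E B"
      using disj unfolding induced_def irrefl_def by auto
    then show "?Q E = ?Q (E - E \<inter> (?X \<times> ?X))" by simp
  qed
  have "prob (?X \<union> ?W) (\<lambda>E. ?P (induced E ?X) \<and> ?Q E) = prob ?X ?P * prob (?X \<union> ?W) ?Q"
    by (rule indep2) (use fin d Qc in auto)
  moreover have "prob (?X \<union> ?W) (\<lambda>E. ?P (induced E ?X) \<and> ?Q E) =
      prob (?X \<union> ?W) (\<lambda>E. inT A (induced E A) \<and> is_clique E (nbr E A b) \<and> \<not> inT B (induced E B))"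
  proof (rule prob_cong, rule ballI)
    fix E
    have s: "nbr E A b \<subseteq> ?X" unfolding nbr_def by auto
    have n: "nbr (induced E ?X) A b = nbr E A b" by (rule nbr_induced) auto
    have i: "induced (induced E ?X) A = induced E A" by (rule induced_induced) auto
    show "(?P (induced E ?X) \<and> ?Q E) = (inT A (induced E A) \<and> is_clique E (nbr E A b) \<and> \<not> inT B (induced E B))"
      unfolding n i using clique_induced[OF s] by simp
  qed
  moreover have "prob ?X ?P = real (cc A) / (real (card (gr A)) * 2 ^ card A)"
    using vert_probT[OF fin(1), of b] disj b by blast
  moreover have "prob (?X \<union> ?W) ?Q = prob B (\<lambda>E. \<not> inT B E)"
    by (rule local) (use fin b in auto)
  ultimately show ?thesis using U by simp
qed

lemma cover:
  assumes "E \<in> gr (A\<union>B)" "finite A" "finite B" "A \<inter> B = {}" "\<not> inT (A\<union>B) E" "inT A (induced E A)"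
  shows "\<exists>b\<in>B. is_clique E (nbr E A b)"
proof (rule ccontr)
  assume "\<not> ?thesis"
  then have nc: "\<forall>b\<in>(A\<union>B) - A. \<not> is_clique E (nbr E A b)" by blast
  have "inT (A\<union>B) E"
    by (rule chain[OF _ _ assms(1) assms(6) nc]) (use assms(2,3) in simp_all)
  then show False using assms by simp
qed

lemma indepAB:
  assumes fin: "finite A" "finite B" and disj: "A \<inter> B = {}"
  shows "prob (A\<union>B) (\<lambda>E. P (induced E A) \<and> Q (induced E B)) = prob A P * prob B Q"
proof -
  have "prob (A\<union>B) (\<lambda>E. P (induced E A) \<and> Q (induced E B)) = prob A P * prob (A\<union>B) (\<lambda>E. Q (induced E B))"
  proof (rule indep2[OF fin disj], rule ballI)
    fix E
    have "induced (E - E \<inter> (A \<times> A)) B = induced E B" using disj unfolding induced_def by auto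
    then show "Q (induced E B) = Q (induced (E - E \<inter> (A \<times> A)) B)" by simp
  qed
  also have "prob (A\<union>B) (\<lambda>E. Q (induced E B)) = prob B Q" by (rule local) (use fin in auto)
  finally show ?thesis .
qed




lemma piT_prob: "piT m = prob {1..m} (\<lambda>E. \<not> inT {1..m} E)"
  unfolding piT_def prob_def graphs_on_def gr_def by simp

lemma fT_qq: "fT n = 2 * real n * qq n"
  unfolding fT_def qq_def by simp

lemma qq_ge0: "qq n \<ge> 0" unfolding qq_def by (intro sum_nonneg) simp

lemma part3: "piT (n+1) \<le> piT n + qq n"
proof -
  let ?A = "{1..n}" and ?V = "{1..n+1}"
  have V: "?V = ?A \<union> {n+1}" by auto
  have "piT (n+1) = prob ?V (\<lambda>E. \<not> inT ?V E)" by (rule piT_prob)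
  also have "\<dots> \<le> prob ?V (\<lambda>E. \<not> inT ?A (induced E ?A) \<or> is_clique E (nbr E ?A (n+1)))"
  proof (rule prob_mono, simp, rule ballI, rule impI)
    fix E assume E: "E \<in> gr ?V" "\<not> inT ?V E"
    show "\<not> inT ?A (induced E ?A) \<or> is_clique E (nbr E ?A (n+1))"
      using cover[of E ?A "{n+1}"] E V by auto
  qed
  also have "\<dots> \<le> prob ?V (\<lambda>E. \<not> inT ?A (induced E ?A)) + prob ?V (\<lambda>E. is_clique E (nbr E ?A (n+1)))"
    by (rule prob_disj) simp
  also have "prob ?V (\<lambda>E. \<not> inT ?A (induced E ?A)) = piT n"
    unfolding piT_prob by (rule local) auto
  also have "prob ?V (\<lambda>E. is_clique E (nbr E ?A (n+1))) = qq n"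
    using vert_local[of ?V ?A "n+1"] by simp
  finally show ?thesis .
qed

lemma piT0: "piT 0 = 1"
proof -
  have "piT 0 = prob {} (\<lambda>E. \<not> inT {} E)" using piT_prob[of 0] by simp
  also have "\<dots> = prob {} (\<lambda>E. True)" by (rule prob_cong) (use inT_size in force)
  also have "\<dots> = 1" by (rule prob_true) simp
  finally show ?thesis .
qed

lemma shiftAB: "mbij (\<lambda>x. x + n) (\<lambda>y. y - n) {1..n} {n+1..2*n}"
  unfolding mbij_def by auto

lemma probB: "prob {n+1..2*n} (\<lambda>E. \<not> inT {n+1..2*n} E) = piT n"
proof -
  let ?f = "\<lambda>x::nat. x + n"
  have m: "mbij ?f (\<lambda>y. y - n) {1..n} {n+1..2*n}" by (rule shiftAB)
  have c1: "card {E\<in>gr {n+1..2*n}. \<not> inT {n+1..2*n} E} = card {E\<in>gr {1..n}. \<not> inT {n+1..2*n} (img ?f E)}"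
    by (rule card_filter_img[OF m])
  also have "\<dots> = card {E\<in>gr {1..n}. \<not> inT {1..n} E}"
    by (rule arg_cong[where f=card]) (use inT_img_iff[OF m] in auto)
  finally have c1: "card {E\<in>gr {n+1..2*n}. \<not> inT {n+1..2*n} E} = card {E\<in>gr {1..n}. \<not> inT {1..n} E}" .
  have c2: "card (gr {n+1..2*n}) = card (gr {1..n})"
    using card_filter_img[OF m, of "\<lambda>E. True"] by simp
  show ?thesis unfolding piT_prob prob_def c1 c2 ..
qed

lemma part1: "piT (2*n) \<le> (piT n)^2 + 2 * real n * qq n"
proof -
  let ?A = "{1..n}" and ?B = "{n+1..2*n}" and ?V = "{1..2*n}"
  have V: "?V = ?A \<union> ?B" by auto
  have d: "?A \<inter> ?B = {}" "?B \<inter> ?A = {}" by auto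
  have V': "?V = ?B \<union> ?A" by auto
  have "piT (2*n) = prob ?V (\<lambda>E. \<not> inT ?V E)" by (rule piT_prob)
  also have "\<dots> \<le> prob ?V (\<lambda>E. (\<not> inT ?A (induced E ?A) \<and> \<not> inT ?B (induced E ?B)) \<or>
        ((\<exists>b\<in>?B. is_clique E (nbr E ?A b)) \<or> (\<exists>a\<in>?A. is_clique E (nbr E ?B a))))"
  proof (rule prob_mono, simp, rule ballI, rule impI)
    fix E assume E: "E \<in> gr ?V" "\<not> inT ?V E"
    show "(\<not> inT ?A (induced E ?A) \<and> \<not> inT ?B (induced E ?B)) \<or>
        ((\<exists>b\<in>?B. is_clique E (nbr E ?A b)) \<or> (\<exists>a\<in>?A. is_clique E (nbr E ?B a)))"
      using cover[of E ?A ?B] cover[of E ?B ?A] E V V' d by auto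
  qed
  also have "\<dots> \<le> prob ?V (\<lambda>E. \<not> inT ?A (induced E ?A) \<and> \<not> inT ?B (induced E ?B)) +
     prob ?V (\<lambda>E. (\<exists>b\<in>?B. is_clique E (nbr E ?A b)) \<or> (\<exists>a\<in>?A. is_clique E (nbr E ?B a)))"
    by (rule prob_disj) simp
  also have "prob ?V (\<lambda>E. (\<exists>b\<in>?B. is_clique E (nbr E ?A b)) \<or> (\<exists>a\<in>?A. is_clique E (nbr E ?B a)))
     \<le> prob ?V (\<lambda>E. \<exists>b\<in>?B. is_clique E (nbr E ?A b)) + prob ?V (\<lambda>E. \<exists>a\<in>?A. is_clique E (nbr E ?B a))"
    by (rule prob_disj) simp
  also have "prob ?V (\<lambda>E. \<exists>b\<in>?B. is_clique E (nbr E ?A b)) \<le> (\<Sum>b\<in>?B. prob ?V (\<lambda>E. is_clique E (nbr E ?A b)))"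
    by (rule prob_ex) auto
  also have "\<dots> = (\<Sum>b\<in>?B. qq n)"
    by (intro sum.cong refl) (subst vert_local, auto)
  also have "prob ?V (\<lambda>E. \<exists>a\<in>?A. is_clique E (nbr E ?B a)) \<le> (\<Sum>a\<in>?A. prob ?V (\<lambda>E. is_clique E (nbr E ?B a)))"
    by (rule prob_ex) auto
  also have "\<dots> = (\<Sum>a\<in>?A. qq n)"
    by (intro sum.cong refl) (subst vert_local, auto)
  also have "prob ?V (\<lambda>E. \<not> inT ?A (induced E ?A) \<and> \<not> inT ?B (induced E ?B)) = piT n * piT n"
  proof -
    have "prob (?A \<union> ?B) (\<lambda>E. \<not> inT ?A (induced E ?A) \<and> \<not> inT ?B (induced E ?B))
       = prob ?A (\<lambda>E. \<not> inT ?A E) * prob ?B (\<lambda>E. \<not> inT ?B E)"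
      using indepAB[OF _ _ d(1), of "\<lambda>E. \<not> inT ?A E" "\<lambda>E. \<not> inT ?B E"] by simp
    then show ?thesis using V probB[of n] piT_prob[of n] by simp
  qed
  finally show ?thesis by (simp add: power2_eq_square)
qed


lemma part2: "piT (2*n) \<le> (piT n)^2
   + 2 * (real n * (real (cc {1..n}) / (real (card (gr {1..n})) * 2 ^ n)) * piT n) + (1 - piT n)^2"
proof -
  let ?A = "{1..n}" and ?B = "{n+1..2*n}" and ?V = "{1..2*n}"
  let ?K = "real (cc {1..n}) / (real (card (gr {1..n})) * 2 ^ n)"
  have V: "?V = ?A \<union> ?B" by auto
  have d: "?A \<inter> ?B = {}" "?B \<inter> ?A = {}" by auto
  have V': "?V = ?B \<union> ?A" by auto
  have m: "mbij (\<lambda>x. x + n) (\<lambda>y. y - n) ?A ?B" by (rule shiftAB)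
  have ccB: "cc ?B = cc ?A" by (rule cc_img[OF m]) simp
  have grB: "card (gr ?B) = card (gr ?A)" using card_filter_img[OF m, of "\<lambda>E. True"] by simp
  have pA: "prob ?A (\<lambda>E. \<not> inT ?A E) = piT n" using piT_prob[of n] by simp
  have pB: "prob ?B (\<lambda>E. \<not> inT ?B E) = piT n" by (rule probB)
  have "piT (2*n) = prob ?V (\<lambda>E. \<not> inT ?V E)" by (rule piT_prob)
  also have "\<dots> \<le> prob ?V (\<lambda>E. (\<not> inT ?A (induced E ?A) \<and> \<not> inT ?B (induced E ?B)) \<or>
        (((\<exists>b\<in>?B. inT ?A (induced E ?A) \<and> is_clique E (nbr E ?A b) \<and> \<not> inT ?B (induced E ?B)) \<or>
          (\<exists>a\<in>?A. inT ?B (induced E ?B) \<and> is_clique E (nbr E ?B a) \<and> \<not> inT ?A (induced E ?A))) \<or>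
         (inT ?A (induced E ?A) \<and> inT ?B (induced E ?B))))"
  proof (rule prob_mono, simp, rule ballI, rule impI)
    fix E assume E: "E \<in> gr ?V" "\<not> inT ?V E"
    show "(\<not> inT ?A (induced E ?A) \<and> \<not> inT ?B (induced E ?B)) \<or>
        (((\<exists>b\<in>?B. inT ?A (induced E ?A) \<and> is_clique E (nbr E ?A b) \<and> \<not> inT ?B (induced E ?B)) \<or>
          (\<exists>a\<in>?A. inT ?B (induced E ?B) \<and> is_clique E (nbr E ?B a) \<and> \<not> inT ?A (induced E ?A))) \<or>
         (inT ?A (induced E ?A) \<and> inT ?B (induced E ?B)))"
      using cover[of E ?A ?B] cover[of E ?B ?A] E V V' d by auto
  qed
  also have "\<dots> \<le> prob ?V (\<lambda>E. \<not> inT ?A (induced E ?A) \<and> \<not> inT ?B (induced E ?B)) +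
     prob ?V (\<lambda>E. ((\<exists>b\<in>?B. inT ?A (induced E ?A) \<and> is_clique E (nbr E ?A b) \<and> \<not> inT ?B (induced E ?B)) \<or>
          (\<exists>a\<in>?A. inT ?B (induced E ?B) \<and> is_clique E (nbr E ?B a) \<and> \<not> inT ?A (induced E ?A))) \<or>
         (inT ?A (induced E ?A) \<and> inT ?B (induced E ?B)))"
    by (rule prob_disj) simp
  also have "prob ?V (\<lambda>E. ((\<exists>b\<in>?B. inT ?A (induced E ?A) \<and> is_clique E (nbr E ?A b) \<and> \<not> inT ?B (induced E ?B)) \<or>
          (\<exists>a\<in>?A. inT ?B (induced E ?B) \<and> is_clique E (nbr E ?B a) \<and> \<not> inT ?A (induced E ?A))) \<or>
         (inT ?A (induced E ?A) \<and> inT ?B (induced E ?B)))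
     \<le> prob ?V (\<lambda>E. (\<exists>b\<in>?B. inT ?A (induced E ?A) \<and> is_clique E (nbr E ?A b) \<and> \<not> inT ?B (induced E ?B)) \<or>
          (\<exists>a\<in>?A. inT ?B (induced E ?B) \<and> is_clique E (nbr E ?B a) \<and> \<not> inT ?A (induced E ?A)))
       + prob ?V (\<lambda>E. inT ?A (induced E ?A) \<and> inT ?B (induced E ?B))"
    by (rule prob_disj) simp
  also have "prob ?V (\<lambda>E. (\<exists>b\<in>?B. inT ?A (induced E ?A) \<and> is_clique E (nbr E ?A b) \<and> \<not> inT ?B (induced E ?B)) \<or>
          (\<exists>a\<in>?A. inT ?B (induced E ?B) \<and> is_clique E (nbr E ?B a) \<and> \<not> inT ?A (induced E ?A)))
     \<le> prob ?V (\<lambda>E. \<exists>b\<in>?B. inT ?A (induced E ?A) \<and> is_clique E (nbr E ?A b) \<and> \<not> inT ?B (induced E ?B))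
       + prob ?V (\<lambda>E. \<exists>a\<in>?A. inT ?B (induced E ?B) \<and> is_clique E (nbr E ?B a) \<and> \<not> inT ?A (induced E ?A))"
    by (rule prob_disj) simp
  also have "prob ?V (\<lambda>E. \<exists>b\<in>?B. inT ?A (induced E ?A) \<and> is_clique E (nbr E ?A b) \<and> \<not> inT ?B (induced E ?B))
     \<le> (\<Sum>b\<in>?B. prob ?V (\<lambda>E. inT ?A (induced E ?A) \<and> is_clique E (nbr E ?A b) \<and> \<not> inT ?B (induced E ?B)))"
    by (rule prob_ex) auto
  also have "\<dots> = (\<Sum>b\<in>?B. ?K * piT n)"
  proof (intro sum.cong refl)
    fix b assume b: "b \<in> ?B"
    show "prob ?V (\<lambda>E. inT ?A (induced E ?A) \<and> is_clique E (nbr E ?A b) \<and> \<not> inT ?B (induced E ?B)) = ?K * piT n"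
      unfolding V using XB[OF _ _ d(1) b] pB by simp
  qed
  also have "prob ?V (\<lambda>E. \<exists>a\<in>?A. inT ?B (induced E ?B) \<and> is_clique E (nbr E ?B a) \<and> \<not> inT ?A (induced E ?A))
     \<le> (\<Sum>a\<in>?A. prob ?V (\<lambda>E. inT ?B (induced E ?B) \<and> is_clique E (nbr E ?B a) \<and> \<not> inT ?A (induced E ?A)))"
    by (rule prob_ex) auto
  also have "\<dots> = (\<Sum>a\<in>?A. ?K * piT n)"
  proof (intro sum.cong refl)
    fix a assume a: "a \<in> ?A"
    show "prob ?V (\<lambda>E. inT ?B (induced E ?B) \<and> is_clique E (nbr E ?B a) \<and> \<not> inT ?A (induced E ?A)) = ?K * piT n"
      unfolding V' using XB[OF _ _ d(2) a] pA ccB grB by simp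
  qed
  also have "prob ?V (\<lambda>E. \<not> inT ?A (induced E ?A) \<and> \<not> inT ?B (induced E ?B)) = piT n * piT n"
  proof -
    have "prob (?A \<union> ?B) (\<lambda>E. \<not> inT ?A (induced E ?A) \<and> \<not> inT ?B (induced E ?B))
       = prob ?A (\<lambda>E. \<not> inT ?A E) * prob ?B (\<lambda>E. \<not> inT ?B E)"
      using indepAB[OF _ _ d(1), of "\<lambda>E. \<not> inT ?A E" "\<lambda>E. \<not> inT ?B E"] by simp
    then show ?thesis using V pA pB by simp
  qed
  also have "prob ?V (\<lambda>E. inT ?A (induced E ?A) \<and> inT ?B (induced E ?B)) = (1 - piT n) * (1 - piT n)"
  proof -
    have "prob (?A \<union> ?B) (\<lambda>E. inT ?A (induced E ?A) \<and> inT ?B (induced E ?B))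
       = prob ?A (\<lambda>E. inT ?A E) * prob ?B (\<lambda>E. inT ?B E)"
      using indepAB[OF _ _ d(1), of "\<lambda>E. inT ?A E" "\<lambda>E. inT ?B E"] by simp
    moreover have "prob ?A (\<lambda>E. inT ?A E) = 1 - piT n" using pA prob_not[of ?A "\<lambda>E. inT ?A E"] by simp
    moreover have "prob ?B (\<lambda>E. inT ?B E) = 1 - piT n" using pB prob_not[of ?B "\<lambda>E. inT ?B E"] by simp
    ultimately show ?thesis using V by simp
  qed
  finally show ?thesis by (simp add: power2_eq_square algebra_simps)
qed

theorem lemma3p11:
  fixes n :: nat
  shows "piT (2*n) \<le> (piT n)^2 + fT n
    \<and> piT (2*n) \<le> (piT n)^2
           + 2 * piT n * (1 - piT n) * (real n * real (cT n) / (2^n * real (tT n)))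
           + (1 - piT n)^2
    \<and> piT (n+1) \<le> piT n + fT n"
proof (intro conjI)
  show "piT (2*n) \<le> (piT n)^2 + fT n" using part1[of n] fT_qq[of n] by simp
  show "piT (n+1) \<le> piT n + fT n"
  proof (cases "n = 0")
    case True
    have "piT 1 \<le> 1" unfolding piT_prob by (rule prob_le1) simp
    then show ?thesis using True piT0 fT_qq[of 0] by simp
  next
    case False
    then have "qq n \<le> fT n" unfolding fT_qq using qq_ge0[of n]
      by (simp add: mult_le_cancel_right1 )
    then show ?thesis using part3[of n] by simp
  qed
  let ?A = "{1..n::nat}"
  let ?K = "real (cc ?A) / (real (card (gr ?A)) * 2 ^ n)"
  have cT: "cT n = cc ?A" unfolding cT_def cc_def graphs_on_def gr_def ..
  have tT: "tT n = card {E\<in>gr ?A. inT ?A E}" unfolding tT_def graphs_on_def gr_def ..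
  have G: "real (card (gr ?A)) > 0" using card_gr_pos[of ?A] by simp
  have pt: "1 - piT n = real (tT n) / real (card (gr ?A))"
  proof -
    have "prob ?A (\<lambda>E. \<not> inT ?A E) = 1 - prob ?A (\<lambda>E. inT ?A E)" by (rule prob_not) simp
    then show ?thesis unfolding piT_prob tT prob_def by simp
  qed
  have key: "2 * (real n * ?K * piT n) = 2 * piT n * (1 - piT n) * (real n * real (cT n) / (2^n * real (tT n)))"
  proof (cases "tT n = 0")
    case True
    have "{E\<in>gr ?A. inT ?A E} = {}" using True tT gr_finite[of ?A] by simp
    then have "cc ?A = 0" unfolding cc_def by (metis (no_types, lifting) sum.empty)
    then show ?thesis using True cT by simp
  next
    case False
    then show ?thesis unfolding pt cT using G by (simp add: field_simps)
  qed
  show "piT (2*n) \<le> (piT n)^2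
           + 2 * piT n * (1 - piT n) * (real n * real (cT n) / (2^n * real (tT n)))
           + (1 - piT n)^2"
    using part2[of n] key by simp
qed


end
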